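(* If $\mu^\ast$ is an upper quasi-density on $\mathbb{H}$, then $\mu^\ast(X)=0$ for every finite $X\subseteq\mathbb{H}$.
   Context: $\mathbb{N}=\{0,1,2,\dots\}$, $\mathbb{N}^+=\{1,2,\dots\}$; $\mathbb{H}$ is one of $\mathbb{Z},\mathbb{N},\mathbb{N}^+$. For $X\subseteq\mathbb{H}$, $k\in\mathbb{N}^+$, $h\in\mathbb{N}$, $k\cdot X+h:=\{kx+h:x\in X\}$. An upper quasi-density on $\mathbb{H}$ is a function $\mu^\ast:\mathcal{P}(\mathbb{H})\to\mathbb{R}$ with $\mu^\ast(\mathbb{H})=1$, $\mu^\ast(X)\le1$ for all $X$, $\mu^\ast(X\cup Y)\le\mu^\ast(X)+\mu^\ast(Y)$ for all $X,Y$, and $\mu^\ast(k\cdot X+h)=\frac1k\mu^\ast(X)$ for all $X\subseteq\mathbb{H}$, $h,k\in\mathbb{N}^+$. *)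

theory Defs
  imports Complex_Main
begin

definition admissible_H :: "int set \<Rightarrow> bool" where
  "admissible_H H \<longleftrightarrow> H = UNIV \<or> H = {0..} \<or> H = {1..}"

definition dil_shift :: "int \<Rightarrow> int set \<Rightarrow> int \<Rightarrow> int set" where
  "dil_shift k X h = (\<lambda>x. k * x + h) ` X"

text \<open>Upper quasi-density on H: a function defined on the power set of H
  (values outside Pow H are irrelevant).\<close>
definition upper_quasi_density :: "int set \<Rightarrow> (int set \<Rightarrow> real) \<Rightarrow> bool" where
  "upper_quasi_density H mu \<longleftrightarrow>
     mu H = 1 \<and>
     (\<forall>X. X \<subseteq> H \<longrightarrow> mu X \<le> 1) \<and>
     (\<forall>X Y. X \<subseteq> H \<longrightarrow> Y \<subseteq> H \<longrightarrow> mu (X \<union> Y) \<le> mu X + mu Y) \<and>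
     (\<forall>X k h. X \<subseteq> H \<longrightarrow> k \<ge> 1 \<longrightarrow> h \<ge> 1 \<longrightarrow> mu (dil_shift k X h) = mu X / real_of_int k)"

end

theory Submission
  imports Defs
begin

lemma single_zero:
  assumes u: "upper_quasi_density H mu" and x: "x \<in> H"
  shows "mu {x} = 0"
proof -
  define h where "h = \<bar>x\<bar> + 1"
  have d: "\<forall>X k h. X \<subseteq> H \<longrightarrow> k \<ge> 1 \<longrightarrow> h \<ge> 1 \<longrightarrow> mu (dil_shift k X h) = mu X / real_of_int k"
    using u unfolding upper_quasi_density_def by blast
  have "mu (dil_shift 2 {x} h) = mu {x} / 2" using d x h_def by force
  moreover have "mu (dil_shift 1 {x} (x + h)) = mu {x}" using d x h_def by force
  moreover have "dil_shift 2 {x} h = dil_shift 1 {x} (x + h)" by (simp add: dil_shift_def)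
  ultimately show ?thesis by simp
qed

theorem mainTheorem5:
  fixes H :: "int set" and mu :: "int set \<Rightarrow> real" and X :: "int set"
  assumes "admissible_H H"
    and "upper_quasi_density H mu"
    and "finite X" and "X \<subseteq> H"
  shows "mu X = 0"
proof -
  have sub: "\<And>X Y. X \<subseteq> H \<Longrightarrow> Y \<subseteq> H \<Longrightarrow> mu (X \<union> Y) \<le> mu X + mu Y"
    using assms(2) unfolding upper_quasi_density_def by blast
  have ge: "mu X \<ge> 0" using sub[OF assms(4) assms(4)] by simp
  have "X \<subseteq> H \<Longrightarrow> mu X \<le> 0" using assms(3)
  proof (induction X rule: finite_induct)
    case empty
    have "mu (dil_shift 2 {} 1) = mu {} / 2"
      using assms(2) unfolding upper_quasi_density_def by force
    then show ?case by (simp add: dil_shift_def)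
  next
    case (insert x F)
    have "mu ({x} \<union> F) \<le> mu {x} + mu F" using sub[of "{x}" F] insert by simp
    moreover have "mu {x} = 0" using single_zero[OF assms(2)] insert by simp
    ultimately show ?case using insert by (simp add: insert_is_Un[symmetric])
  qed
  with ge assms(4) show ?thesis by simp
qed

end
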